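(* Let $\sigma=(a_1,\ldots,a_s)$ be a partition of $r$ and let $H=H(n,r,q\mid\sigma)$ with $n\ge s$ and $q\ge r$. Suppose $d=\gcd(a_1,\ldots,a_s)\ge2$ and $q\equiv t\pmod d$ with $1\le t\le d-1$. Then every maximum matching of $H$ leaves at least $tn$ vertices unmatched. Hence $\nu(H)\le\frac{n(q-t)}{r}$.
   Context: A $\sigma$-hypergraph $H=H(n,r,q\mid\sigma)$, for a partition $\sigma=(a_1,\ldots,a_s)$ of $r$ with $s$ parts, is the $r$-uniform hypergraph whose vertex set is the disjoint union of $n$ classes $V_1,\ldots,V_n$, each of size $q$; an $r$-subset $K$ of vertices is an edge iff the multiset of non-zero values $|K\cap V_i|$ equals $\sigma$. A matching is a set of pairwise vertex-disjoint edges; $\nu(H)$ is the maximum size of a matching. *)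

theory Defs
  imports Complex_Main "HOL-Library.Multiset"
begin

definition sh_vertices :: "nat \<Rightarrow> nat \<Rightarrow> (nat \<times> nat) set" where
  "sh_vertices n q = {0..<n} \<times> {0..<q}"

definition sh_class :: "nat \<Rightarrow> nat \<Rightarrow> (nat \<times> nat) set" where
  "sh_class q i = {i} \<times> {0..<q}"

definition sh_edges :: "nat \<Rightarrow> nat \<Rightarrow> nat \<Rightarrow> nat multiset \<Rightarrow> (nat \<times> nat) set set" where
  "sh_edges n r q \<sigma> = {K. K \<subseteq> sh_vertices n q \<and> card K = r \<and>
      image_mset (\<lambda>i. card (K \<inter> sh_class q i))
        (mset_set {i \<in> {0..<n}. K \<inter> sh_class q i \<noteq> {}}) = \<sigma>}"

definition is_partition_of :: "nat multiset \<Rightarrow> nat \<Rightarrow> bool" where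
  "is_partition_of \<sigma> r \<longleftrightarrow> (\<forall>a \<in># \<sigma>. 0 < a) \<and> sum_mset \<sigma> = r"

definition is_matching :: "'a set set \<Rightarrow> 'a set set \<Rightarrow> bool" where
  "is_matching E M \<longleftrightarrow> M \<subseteq> E \<and> pairwise disjnt M"

definition matching_number :: "'a set set \<Rightarrow> nat" where
  "matching_number E = Max (card ` {M. is_matching E M})"

definition is_max_matching :: "'a set set \<Rightarrow> 'a set set \<Rightarrow> bool" where
  "is_max_matching E M \<longleftrightarrow> is_matching E M \<and> card M = matching_number E"

end

theory Submission
  imports Defs
begin

lemma edge_dvd:
  assumes K: "K \<in> sh_edges n r q \<sigma>" and dv: "\<And>a. a \<in># \<sigma> \<Longrightarrow> d dvd a"
  shows "d dvd card (K \<inter> sh_class q i)"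
proof (cases "K \<inter> sh_class q i = {}")
  case True then show ?thesis by simp
next
  case False
  have sub: "K \<subseteq> {0..<n} \<times> {0..<q}" using K by (simp add: sh_edges_def sh_vertices_def)
  have i: "i < n" using False sub by (auto simp: sh_class_def)
  have eq: "image_mset (\<lambda>i. card (K \<inter> sh_class q i))
        (mset_set {i \<in> {0..<n}. K \<inter> sh_class q i \<noteq> {}}) = \<sigma>"
    using K by (simp add: sh_edges_def)
  have "card (K \<inter> sh_class q i) \<in># image_mset (\<lambda>i. card (K \<inter> sh_class q i))
        (mset_set {i \<in> {0..<n}. K \<inter> sh_class q i \<noteq> {}})"
    using i False by auto
  then have "card (K \<inter> sh_class q i) \<in># \<sigma>" using eq by metis
  then show ?thesis using dv by blast
qed

lemma finite_edges: "finite (sh_edges n r q \<sigma>)"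
proof -
  have "sh_edges n r q \<sigma> \<subseteq> Pow (sh_vertices n q)" by (auto simp: sh_edges_def)
  moreover have "finite (Pow (sh_vertices n q))" by (simp add: sh_vertices_def)
  ultimately show ?thesis by (rule finite_subset)
qed

lemma card_union_int:
  assumes "finite M" "pairwise disjnt M" "\<And>K. K \<in> M \<Longrightarrow> finite K"
  shows "card (\<Union>M \<inter> C) = (\<Sum>K\<in>M. card (K \<inter> C))"
proof -
  have "\<Union>M \<inter> C = (\<Union>K\<in>M. K \<inter> C)" by auto
  moreover have "card (\<Union>K\<in>M. K \<inter> C) = (\<Sum>K\<in>M. card (K \<inter> C))"
    apply (rule card_UN_disjoint)
    using assms by (auto simp: pairwise_def disjnt_def)
  ultimately show ?thesis by simp
qed

lemma modlem:
  fixes q m d t :: nat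
  assumes "m \<le> q" "d dvd m" "q mod d = t" "1 \<le> t"
  shows "t \<le> q - m"
proof -
  obtain k where k: "m = d * k" using assms(2) by blast
  have "q = (q - m) + k * d" using assms(1) k by simp
  then have "q mod d = (q - m) mod d" by (metis mod_mult_self1)
  then show ?thesis using assms(3) by (metis mod_less_eq_dividend)
qed

lemma main_bound:
  assumes M: "is_matching (sh_edges n r q \<sigma>) M"
    and dv: "\<And>a. a \<in># \<sigma> \<Longrightarrow> d dvd a"
    and qt: "q mod d = t" and t1: "1 \<le> t"
  shows "t * n \<le> card (sh_vertices n q - \<Union>M)" and "card M * r + t * n \<le> n * q"
proof -
  have Msub: "M \<subseteq> sh_edges n r q \<sigma>" and pw: "pairwise disjnt M"
    using M by (auto simp: is_matching_def)
  have fM: "finite M" using Msub finite_edges finite_subset by blast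
  have Ksub: "\<And>K. K \<in> M \<Longrightarrow> K \<subseteq> sh_vertices n q \<and> card K = r"
    using Msub by (auto simp: sh_edges_def)
  have fK: "\<And>K. K \<in> M \<Longrightarrow> finite K"
    using Ksub finite_subset[of _ "sh_vertices n q"] by (simp add: sh_vertices_def)
  have UMsub: "\<Union>M \<subseteq> sh_vertices n q" using Ksub by blast
  have fV: "finite (sh_vertices n q)" by (simp add: sh_vertices_def)
  have cls: "\<And>i. d dvd card (\<Union>M \<inter> sh_class q i)"
  proof -
    fix i
    have "card (\<Union>M \<inter> sh_class q i) = (\<Sum>K\<in>M. card (K \<inter> sh_class q i))"
      using card_union_int[OF fM pw fK] by blast
    moreover have "d dvd (\<Sum>K\<in>M. card (K \<inter> sh_class q i))"
      by (rule dvd_sum) (use Msub edge_dvd[OF _ dv] in blast)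
    ultimately show "d dvd card (\<Union>M \<inter> sh_class q i)" by simp
  qed
  have clsq: "\<And>i. card (sh_class q i) = q" by (simp add: sh_class_def)
  have fC: "\<And>i. finite (sh_class q i)" by (simp add: sh_class_def)
  have each: "\<And>i. t \<le> card (sh_class q i - \<Union>M)"
  proof -
    fix i
    have "card (sh_class q i - \<Union>M) = q - card (sh_class q i \<inter> \<Union>M)"
      by (simp add: card_Diff_subset_Int fC clsq card_Diff_subset)
    moreover have "card (sh_class q i \<inter> \<Union>M) \<le> q"
      by (metis clsq card_mono fC inf.cobounded1)
    moreover have "d dvd card (sh_class q i \<inter> \<Union>M)" using cls[of i] by (simp add: Int_commute)
    ultimately show "t \<le> card (sh_class q i - \<Union>M)" using modlem qt t1 by presburger
  qed
  have decomp: "sh_vertices n q - \<Union>M = (\<Union>i\<in>{0..<n}. sh_class q i - \<Union>M)"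
    by (auto simp: sh_vertices_def sh_class_def)
  have "card (\<Union>i\<in>{0..<n}. sh_class q i - \<Union>M) = (\<Sum>i\<in>{0..<n}. card (sh_class q i - \<Union>M))"
    by (rule card_UN_disjoint) (auto simp: fC sh_class_def)
  moreover have "(\<Sum>i\<in>{0..<n}. t) \<le> (\<Sum>i\<in>{0..<n}. card (sh_class q i - \<Union>M))"
    by (rule sum_mono) (rule each)
  ultimately show A: "t * n \<le> card (sh_vertices n q - \<Union>M)" using decomp by (simp add: mult.commute)
  have "card (\<Union>M) = (\<Sum>K\<in>M. card K)"
    using card_union_int[OF fM pw fK, of UNIV] by simp
  also have "\<dots> = card M * r" using Ksub by simp
  finally have cu: "card (\<Union>M) = card M * r" .
  have "card (sh_vertices n q - \<Union>M) = card (sh_vertices n q) - card (\<Union>M)"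
    using UMsub fV by (simp add: card_Diff_subset finite_subset)
  moreover have "card (sh_vertices n q) = n * q" by (simp add: sh_vertices_def)
  moreover have "card (\<Union>M) \<le> card (sh_vertices n q)" using UMsub fV card_mono by blast
  ultimately show "card M * r + t * n \<le> n * q" using A cu by linarith
qed

theorem lemma3p4:
  fixes n r q t d :: nat and \<sigma> :: "nat multiset"
  assumes "is_partition_of \<sigma> r"
    and "n \<ge> size \<sigma>" and "q \<ge> r"
    and "d = Gcd (set_mset \<sigma>)" and "d \<ge> 2"
    and "q mod d = t mod d" and "1 \<le> t" and "t \<le> d - 1"
  shows "(\<forall>M. is_max_matching (sh_edges n r q \<sigma>) M \<longrightarrow>
            card (sh_vertices n q - \<Union>M) \<ge> t * n)
       \<and> real (matching_number (sh_edges n r q \<sigma>)) \<le> real n * (real q - real t) / real r"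
proof -
  have dv: "\<And>a. a \<in># \<sigma> \<Longrightarrow> d dvd a" using assms(4) by simp
  have qt: "q mod d = t" using assms(5-8) by simp
  have ne: "\<sigma> \<noteq> {#}" using assms(4,5) by auto
  then obtain a where a: "a \<in># \<sigma>" by blast
  have "0 < a" using a assms(1) by (auto simp: is_partition_of_def)
  moreover have "a \<le> r" using a assms(1)
    by (metis is_partition_of_def multi_member_split le_add1 sum_mset.add_mset)
  ultimately have r0: "0 < r" by linarith
  let ?S = "{M. is_matching (sh_edges n r q \<sigma>) M}"
  have fin: "finite ?S"
    by (rule finite_subset[of _ "Pow (sh_edges n r q \<sigma>)"])
       (auto simp: is_matching_def finite_edges)
  have "{} \<in> ?S" by (simp add: is_matching_def)
  then have "matching_number (sh_edges n r q \<sigma>) \<in> card ` ?S"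
    unfolding matching_number_def using fin by (intro Max_in) auto
  then obtain M where M: "is_matching (sh_edges n r q \<sigma>) M"
    and mM: "matching_number (sh_edges n r q \<sigma>) = card M" by auto
  have b: "card M * r + t * n \<le> n * q" using main_bound(2)[OF M dv qt assms(7)] .
  then have "real (card M) * real r \<le> real n * (real q - real t)"
    by (simp add: algebra_simps) (metis of_nat_add of_nat_le_iff of_nat_mult add.commute mult.commute le_diff_eq)
  then have "real (card M) \<le> real n * (real q - real t) / real r"
    using r0 by (simp add: pos_le_divide_eq)
  then show ?thesis using mM main_bound(1)[OF _ dv qt assms(7)]
    by (auto simp: is_max_matching_def)
qed

end
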